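(* Let $G\subseteq\mathrm{GL}_n(\mathbb{R})$ be a finite group and let $H$ be a broad subgroup of $G$. Then every ring homomorphism $\phi:\mathbb{R}[\underline{X}]^G\to\mathbb{R}$ of principal orbit type extends to a ring homomorphism $\tilde\phi:\mathbb{R}[\underline{X}]^H\to\mathbb{R}$.
   Context: $\mathbb{R}[\underline{X}]=\mathbb{R}[X_1,\dots,X_n]$; $\mathbb{R}[\underline{X}]^K$ is the ring of polynomials invariant under a subgroup $K$. An elementary abelian $2$-subgroup $H$ of $G$ is broad if every involution of $G$ is conjugate in $G$ to an element of $H$. Every ring homomorphism $\phi:\mathbb{R}[\underline{X}]^G\to\mathbb{R}$ extends to a homomorphism $\mathbb{R}[\underline{X}]\to\mathbb{C}$, i.e. is evaluation at some point $x\in\mathbb{C}^n$, and these points form a single $G$-orbit. $\phi$ is of principal orbit type if such a point $x$ has trivial stabilizer in $G$. *)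

theory Defs
  imports "HOL-Analysis.Analysis" "HOL-Library.Poly_Mapping"
begin

text \<open>Real polynomials in the variables X_i, i ranging over the finite type 'n
  (so n = CARD('n)): finitely supported maps from monomials (exponent vectors) to
  coefficients, with the convolution ring structure of Poly_Mapping.\<close>
type_synonym 'n rpoly = "('n \<Rightarrow>\<^sub>0 nat) \<Rightarrow>\<^sub>0 real"

definition peval :: "'n::finite rpoly \<Rightarrow> ('n \<Rightarrow> 'a::{real_algebra_1,comm_ring_1}) \<Rightarrow> 'a" where
  "peval p x = (\<Sum>m\<in>Poly_Mapping.keys p.
      of_real (Poly_Mapping.lookup p m) * (\<Prod>i\<in>UNIV. x i ^ Poly_Mapping.lookup m i))"

definition act :: "real^'n^'n \<Rightarrow> ('n::finite \<Rightarrow> 'a::real_algebra_1) \<Rightarrow> ('n \<Rightarrow> 'a)" where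
  "act g x = (\<lambda>i. \<Sum>j\<in>UNIV. of_real (g $ i $ j) * x j)"

definition finite_matrix_group :: "(real^'n^'n) set \<Rightarrow> bool" where
  "finite_matrix_group G \<longleftrightarrow> finite G \<and> G \<subseteq> {A. invertible A} \<and> mat 1 \<in> G \<and>
     (\<forall>a\<in>G. \<forall>b\<in>G. a ** b \<in> G) \<and> (\<forall>a\<in>G. matrix_inv a \<in> G)"

definition is_subgroup :: "(real^'n^'n) set \<Rightarrow> (real^'n^'n) set \<Rightarrow> bool" where
  "is_subgroup H G \<longleftrightarrow> H \<subseteq> G \<and> mat 1 \<in> H \<and>
     (\<forall>a\<in>H. \<forall>b\<in>H. a ** b \<in> H) \<and> (\<forall>a\<in>H. matrix_inv a \<in> H)"

definition elem_abelian_2_subgroup :: "(real^'n^'n) set \<Rightarrow> (real^'n^'n) set \<Rightarrow> bool" where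
  "elem_abelian_2_subgroup H G \<longleftrightarrow> is_subgroup H G \<and>
     (\<forall>a\<in>H. \<forall>b\<in>H. a ** b = b ** a) \<and> (\<forall>a\<in>H. a ** a = mat 1)"

definition involution :: "real^'n^'n \<Rightarrow> bool" where
  "involution g \<longleftrightarrow> g \<noteq> mat 1 \<and> g ** g = mat 1"

definition broad :: "(real^'n^'n) set \<Rightarrow> (real^'n^'n) set \<Rightarrow> bool" where
  "broad H G \<longleftrightarrow> elem_abelian_2_subgroup H G \<and>
     (\<forall>g\<in>G. involution g \<longrightarrow> (\<exists>k\<in>G. matrix_inv k ** g ** k \<in> H))"

definition inv_ring :: "(real^'n^'n) set \<Rightarrow> 'n::finite rpoly set" where
  "inv_ring K = {p. \<forall>g\<in>K. \<forall>x::'n \<Rightarrow> real. peval p (act g x) = peval p x}"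

definition ring_hom_on :: "'n::finite rpoly set \<Rightarrow> ('n rpoly \<Rightarrow> real) \<Rightarrow> bool" where
  "ring_hom_on S \<phi> \<longleftrightarrow> \<phi> 1 = 1 \<and>
     (\<forall>p\<in>S. \<forall>q\<in>S. \<phi> (p + q) = \<phi> p + \<phi> q \<and> \<phi> (p * q) = \<phi> p * \<phi> q)"

definition principal_orbit_type :: "(real^'n^'n) set \<Rightarrow> ('n::finite rpoly \<Rightarrow> real) \<Rightarrow> bool" where
  "principal_orbit_type G \<phi> \<longleftrightarrow> (\<exists>x::'n \<Rightarrow> complex.
      (\<forall>p\<in>inv_ring G. complex_of_real (\<phi> p) = peval p x) \<and>
      (\<forall>g\<in>G. act g x = x \<longrightarrow> g = mat 1))"

end

theory Submission
  imports Defs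
begin

definition mon :: "('n::finite \<Rightarrow>\<^sub>0 nat) \<Rightarrow> ('n \<Rightarrow> 'a::{real_algebra_1,comm_ring_1}) \<Rightarrow> 'a" where
  "mon m x = (\<Prod>i\<in>UNIV. x i ^ Poly_Mapping.lookup m i)"

lemma peval_mon: "peval p x = (\<Sum>m\<in>Poly_Mapping.keys p. of_real (Poly_Mapping.lookup p m) * mon m x)"
  by (simp add: peval_def mon_def)

lemma peval_superset:
  assumes "finite S" "Poly_Mapping.keys p \<subseteq> S"
  shows "peval p x = (\<Sum>m\<in>S. of_real (Poly_Mapping.lookup p m) * mon m x)"
  unfolding peval_mon
  by (rule sum.mono_neutral_left[OF assms]) (auto simp: in_keys_iff)

lemma peval_add: "peval (p + q) x = peval p x + peval q x"
proof -
  let ?S = "Poly_Mapping.keys p \<union> Poly_Mapping.keys q"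
  have "peval (p+q) x = (\<Sum>m\<in>?S. of_real (Poly_Mapping.lookup (p+q) m) * mon m x)"
    by (rule peval_superset) (auto simp: keys_add)
  also have "\<dots> = (\<Sum>m\<in>?S. of_real (Poly_Mapping.lookup p m) * mon m x) + (\<Sum>m\<in>?S. of_real (Poly_Mapping.lookup q m) * mon m x)"
    by (simp add: lookup_add distrib_right sum.distrib)
  also have "\<dots> = peval p x + peval q x"
    by (subst (1 2) peval_superset[of ?S]) auto
  finally show ?thesis .
qed

lemma peval_zero[simp]: "peval 0 x = 0"
  by (simp add: peval_def)

lemma peval_sum: "peval (sum f S) x = (\<Sum>s\<in>S. peval (f s) x)"
  by (induction S rule: infinite_finite_induct) (auto simp: peval_add)

lemma peval_single: "peval (Poly_Mapping.single m c) x = of_real c * mon m x"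
  by (simp add: peval_mon)

lemma mon_add: "mon (m + m') x = mon m x * mon m' x"
  by (simp add: mon_def lookup_add power_add prod.distrib)

lemma poly_decomp: "p = (\<Sum>k\<in>Poly_Mapping.keys p. Poly_Mapping.single k (Poly_Mapping.lookup p k))"
  by (rule poly_mapping_eqI) (auto simp: lookup_sum lookup_single when_def in_keys_iff
        intro: sum.neutral cong: if_cong)

lemma peval_mult: "peval (p * q) x = peval p x * peval q x"
proof -
  have "peval (p * q) x = peval ((\<Sum>k\<in>Poly_Mapping.keys p. Poly_Mapping.single k (Poly_Mapping.lookup p k)) *
      (\<Sum>l\<in>Poly_Mapping.keys q. Poly_Mapping.single l (Poly_Mapping.lookup q l))) x"
    using poly_decomp[of p] poly_decomp[of q] by simp
  also have "\<dots> = (\<Sum>k\<in>Poly_Mapping.keys p. \<Sum>l\<in>Poly_Mapping.keys q. peval (Poly_Mapping.single (k+l) (Poly_Mapping.lookup p k * Poly_Mapping.lookup q l)) x)"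
    by (simp add: sum_distrib_left sum_distrib_right peval_sum mult_single sum.swap[of _ "Poly_Mapping.keys q"])
  also have "\<dots> = (\<Sum>k\<in>Poly_Mapping.keys p. \<Sum>l\<in>Poly_Mapping.keys q. (of_real (Poly_Mapping.lookup p k) * mon k x) * (of_real (Poly_Mapping.lookup q l) * mon l x))"
    by (simp add: peval_single mon_add mult_ac)
  also have "\<dots> = peval p x * peval q x"
    by (simp add: peval_mon sum_distrib_left sum_distrib_right sum.swap[of _ "Poly_Mapping.keys q"])
  finally show ?thesis .
qed

lemma peval_one[simp]: "peval 1 x = 1"
  by (simp add: peval_mon mon_def lookup_one)

lemma peval_of_real: "peval p (\<lambda>i. of_real (x i)) = (of_real (peval p x) :: 'a::{real_algebra_1,comm_ring_1})"
  by (simp add: peval_def)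

lemma peval_cnj: "peval p (\<lambda>i. cnj (x i)) = cnj (peval p x)"
  by (simp add: peval_def)


definition RP :: "(('n::finite \<Rightarrow> complex) \<Rightarrow> complex) \<Rightarrow> bool" where
  "RP F \<longleftrightarrow> (\<exists>p::'n rpoly. \<forall>z. F z = peval p z)"

lemma mon_zero[simp]: "mon 0 x = 1"
  by (simp add: mon_def)

lemma RP_const: "RP (\<lambda>z. of_real c)"
  unfolding RP_def by (rule exI[of _ "Poly_Mapping.single 0 c"]) (simp add: peval_single)

lemma RP_var: "RP (\<lambda>z. z j)"
proof -
  have "mon (Poly_Mapping.single j 1) z = z j" for z :: "'a \<Rightarrow> complex"
  proof -
    have "mon (Poly_Mapping.single j 1) z = (\<Prod>i\<in>UNIV. if i = j then z j else 1)"
      unfolding mon_def by (rule prod.cong) (auto simp: lookup_single when_def)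
    also have "\<dots> = z j" by (simp add: prod.delta)
    finally show ?thesis .
  qed
  then show ?thesis unfolding RP_def
    by (intro exI[of _ "Poly_Mapping.single (Poly_Mapping.single j 1) 1"]) (simp add: peval_single)
qed

lemma RP_add: "RP F \<Longrightarrow> RP G \<Longrightarrow> RP (\<lambda>z. F z + G z)"
  unfolding RP_def by (metis peval_add)

lemma RP_mult: "RP F \<Longrightarrow> RP G \<Longrightarrow> RP (\<lambda>z. F z * G z)"
  unfolding RP_def by (metis peval_mult)

lemma RP_sum: "(\<And>s. s \<in> S \<Longrightarrow> RP (f s)) \<Longrightarrow> RP (\<lambda>z. \<Sum>s\<in>S. f s z)"
proof (induction S rule: infinite_finite_induct)
  case (infinite A)
  then show ?case using RP_const[of 0] by simp
next
  case empty
  then show ?case using RP_const[of 0] by simp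
next
  case (insert x F)
  then show ?case by (simp add: RP_add)
qed

lemma RP_prod: "(\<And>s. s \<in> S \<Longrightarrow> RP (f s)) \<Longrightarrow> RP (\<lambda>z. \<Prod>s\<in>S. f s z)"
proof (induction S rule: infinite_finite_induct)
  case (infinite A)
  then show ?case using RP_const[of 1] by simp
next
  case empty
  then show ?case using RP_const[of 1] by simp
next
  case (insert x F)
  then show ?case by (simp add: RP_mult)
qed

lemma RP_power: "RP F \<Longrightarrow> RP (\<lambda>z. F z ^ n)"
proof (induction n)
  case 0
  then show ?case using RP_const[of 1] by simp
next
  case (Suc n)
  then show ?case using RP_mult[of F "\<lambda>z. F z ^ n"] by simp
qed

lemma RP_cnj: "RP F \<Longrightarrow> F (\<lambda>i. cnj (z i)) = cnj (F z)"
  unfolding RP_def by (metis peval_cnj)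

lemma RP_act: assumes "RP F" shows "RP (\<lambda>z. F (act g z))"
proof -
  obtain p where p: "\<And>z. F z = peval p z" using assms unfolding RP_def by blast
  have e: "F (act g z) = (\<Sum>m\<in>Poly_Mapping.keys p. of_real (Poly_Mapping.lookup p m) *
     (\<Prod>i\<in>UNIV. (\<Sum>j\<in>UNIV. of_real (g $ i $ j) * z j) ^ Poly_Mapping.lookup m i))" for z
    by (simp add: p peval_def act_def)
  have "RP (\<lambda>z. \<Sum>m\<in>Poly_Mapping.keys p. of_real (Poly_Mapping.lookup p m) *
     (\<Prod>i\<in>UNIV. (\<Sum>j\<in>UNIV. of_real (g $ i $ j) * z j) ^ Poly_Mapping.lookup m i))"
    by (intro RP_sum RP_mult RP_const RP_prod RP_power RP_var)
  then show ?thesis by (simp add: e)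
qed

lemma act_mult: "act (a ** b) z = act a (act b (z::'n::finite \<Rightarrow> 'a::real_algebra_1))"
proof (rule ext)
  fix i
  have "act (a ** b) z i = (\<Sum>j\<in>UNIV. \<Sum>k\<in>UNIV. of_real (a $ i $ k) * (of_real (b $ k $ j) * z j))"
    unfolding act_def matrix_matrix_mult_def
    by (simp add: of_real_sum sum_distrib_right mult.assoc)
  also have "\<dots> = (\<Sum>k\<in>UNIV. \<Sum>j\<in>UNIV. of_real (a $ i $ k) * (of_real (b $ k $ j) * z j))"
    by (rule sum.swap)
  also have "\<dots> = act a (act b z) i"
    unfolding act_def by (simp add: sum_distrib_left)
  finally show "act (a ** b) z i = act a (act b z) i" .
qed

lemma act_one: "act (mat 1) z = z"
  unfolding act_def mat_def by (simp add: if_distrib[of of_real] if_distrib[of "\<lambda>a. a * _"] cong: if_cong)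

lemma act_of_real: "act g (\<lambda>i. of_real (w i)) = (\<lambda>i. (of_real (act g w i) :: 'a::real_algebra_1))"
  unfolding act_def by (simp add: of_real_sum)

lemma act_cnj: "act g (\<lambda>i. cnj (z i)) = (\<lambda>i. cnj (act g z i))"
  unfolding act_def by simp

lemma inv_props: assumes "invertible A"
  shows "A ** matrix_inv A = mat 1" "matrix_inv A ** A = mat 1"
  using someI_ex[OF assms[unfolded invertible_def]] unfolding matrix_inv_def by auto

definition UP :: "(complex \<Rightarrow> complex) \<Rightarrow> bool" where
  "UP f \<longleftrightarrow> (\<exists>q. \<forall>t. f t = poly q t)"

lemma UP_const: "UP (\<lambda>t. c)"
  unfolding UP_def by (rule exI[of _ "[:c:]"]) simp

lemma UP_id: "UP (\<lambda>t. t)"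
  unfolding UP_def by (rule exI[of _ "[:0,1:]"]) simp

lemma UP_add: "UP f \<Longrightarrow> UP g \<Longrightarrow> UP (\<lambda>t. f t + g t)"
  unfolding UP_def by (metis poly_add)

lemma UP_diff: "UP f \<Longrightarrow> UP g \<Longrightarrow> UP (\<lambda>t. f t - g t)"
  unfolding UP_def by (metis poly_diff)

lemma UP_mult: "UP f \<Longrightarrow> UP g \<Longrightarrow> UP (\<lambda>t. f t * g t)"
  unfolding UP_def by (metis poly_mult)

lemma UP_sum: "(\<And>s. s \<in> S \<Longrightarrow> UP (f s)) \<Longrightarrow> UP (\<lambda>t. \<Sum>s\<in>S. f s t)"
  by (induction S rule: infinite_finite_induct) (auto intro: UP_const UP_add)

lemma UP_prod: "(\<And>s. s \<in> S \<Longrightarrow> UP (f s)) \<Longrightarrow> UP (\<lambda>t. \<Prod>s\<in>S. f s t)"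
  by (induction S rule: infinite_finite_induct) (auto intro: UP_const UP_mult)

lemma UP_power: "UP f \<Longrightarrow> UP (\<lambda>t. f t ^ n)"
  by (induction n) (auto intro: UP_const UP_mult)

lemma UP_peval: "(\<And>i. UP (\<lambda>t. u t i)) \<Longrightarrow> UP (\<lambda>t. peval p (u t))"
  unfolding peval_def by (intro UP_sum UP_mult UP_const UP_prod UP_power) auto

lemma UP_act: "(\<And>i. UP (\<lambda>t. u t i)) \<Longrightarrow> UP (\<lambda>t. act g (u t) i)"
  unfolding act_def by (intro UP_sum UP_mult UP_const) auto

lemma UP_zero:
  assumes "UP f" "\<And>s::real. f (of_real s) = 0"
  shows "f t = 0"
proof -
  obtain q where q: "\<And>t. f t = poly q t" using assms(1) unfolding UP_def by blast
  have "range complex_of_real \<subseteq> {x. poly q x = 0}" using assms(2) q by auto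
  moreover have "infinite (range complex_of_real)"
  proof
    assume "finite (range complex_of_real)"
    then have "finite (UNIV::real set)" using finite_imageD inj_of_real by blast
    then show False using infinite_UNIV_char_0 by blast
  qed
  ultimately have "infinite {x. poly q x = 0}" using finite_subset by blast
  then have "q = 0" using poly_roots_finite by blast
  then show ?thesis by (simp add: q)
qed

lemma inv_complex:
  fixes z :: "'n::finite \<Rightarrow> complex"
  assumes "p \<in> inv_ring K" "g \<in> K"
  shows "peval p (act g z) = peval p z"
proof -
  define u where "u = (\<lambda>t::complex. \<lambda>j. complex_of_real (Re (z j)) + t * complex_of_real (Im (z j)))"
  define f where "f = (\<lambda>t. peval p (act g (u t)) - peval p (u t))"
  have Uu: "UP (\<lambda>t. u t i)" for i unfolding u_def by (intro UP_add UP_mult UP_const UP_id)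
  have "UP f" unfolding f_def
    by (intro UP_diff UP_peval UP_act Uu)
  moreover have "f (of_real s) = 0" for s
  proof -
    define v where "v = (\<lambda>j. Re (z j) + s * Im (z j))"
    have hu: "u (of_real s) = (\<lambda>j. of_real (v j))" unfolding u_def v_def by auto
    have "peval p (act g v) = peval p v" using assms unfolding inv_ring_def by blast
    then show ?thesis unfolding f_def hu act_of_real peval_of_real by simp
  qed
  ultimately have "f \<i> = 0" by (rule UP_zero)
  moreover have "u \<i> = z" unfolding u_def by (rule ext) (metis complex_eq mult.commute)
  ultimately show ?thesis unfolding f_def by simp
qed


lemma RP_diff: "RP F \<Longrightarrow> RP G \<Longrightarrow> RP (\<lambda>z. F z - G z)"
proof -
  assume "RP F" "RP G"
  then have "RP (\<lambda>z. F z + of_real (-1) * G z)" by (intro RP_add RP_mult RP_const)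
  then show ?thesis by simp
qed

definition CP :: "(('n::finite \<Rightarrow> complex) \<Rightarrow> complex) \<Rightarrow> bool" where
  "CP F \<longleftrightarrow> (\<exists>A B. RP A \<and> RP B \<and> (\<forall>z. F z = A z + \<i> * B z))"

lemma CP_const: "CP (\<lambda>z. c)"
  unfolding CP_def
  by (rule exI[of _ "\<lambda>z. of_real (Re c)"], rule exI[of _ "\<lambda>z. of_real (Im c)"])
     (simp add: RP_const complex_eq_iff)

lemma CP_var: "CP (\<lambda>z. z j)"
  unfolding CP_def
  by (rule exI[of _ "\<lambda>z. z j"], rule exI[of _ "\<lambda>z. of_real 0"]) (simp add: RP_var RP_const[of 0, simplified])

lemma CP_add: "CP F \<Longrightarrow> CP G \<Longrightarrow> CP (\<lambda>z. F z + G z)"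
  unfolding CP_def
proof (elim exE conjE)
  fix A B A' B' assume *: "RP A" "RP B" "\<forall>z. F z = A z + \<i> * B z" "RP A'" "RP B'" "\<forall>z. G z = A' z + \<i> * B' z"
  show "\<exists>A B. RP A \<and> RP B \<and> (\<forall>z. F z + G z = A z + \<i> * B z)"
    by (rule exI[of _ "\<lambda>z. A z + A' z"], rule exI[of _ "\<lambda>z. B z + B' z"]) (simp add: * RP_add algebra_simps)
qed

lemma CP_diff: "CP F \<Longrightarrow> CP G \<Longrightarrow> CP (\<lambda>z. F z - G z)"
  unfolding CP_def
proof (elim exE conjE)
  fix A B A' B' assume *: "RP A" "RP B" "\<forall>z. F z = A z + \<i> * B z" "RP A'" "RP B'" "\<forall>z. G z = A' z + \<i> * B' z"
  show "\<exists>A B. RP A \<and> RP B \<and> (\<forall>z. F z - G z = A z + \<i> * B z)"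
    by (rule exI[of _ "\<lambda>z. A z - A' z"], rule exI[of _ "\<lambda>z. B z - B' z"]) (simp add: * RP_diff algebra_simps)
qed

lemma CP_mult: "CP F \<Longrightarrow> CP G \<Longrightarrow> CP (\<lambda>z. F z * G z)"
  unfolding CP_def
proof (elim exE conjE)
  fix A B A' B' assume *: "RP A" "RP B" "\<forall>z. F z = A z + \<i> * B z" "RP A'" "RP B'" "\<forall>z. G z = A' z + \<i> * B' z"
  show "\<exists>A B. RP A \<and> RP B \<and> (\<forall>z. F z * G z = A z + \<i> * B z)"
    by (rule exI[of _ "\<lambda>z. A z * A' z - B z * B' z"], rule exI[of _ "\<lambda>z. A z * B' z + B z * A' z"])
       (simp add: * RP_diff RP_add RP_mult algebra_simps)
qed

lemma CP_sum: "(\<And>s. s \<in> S \<Longrightarrow> CP (f s)) \<Longrightarrow> CP (\<lambda>z. \<Sum>s\<in>S. f s z)"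
  by (induction S rule: infinite_finite_induct) (auto intro: CP_const CP_add)

lemma CP_prod: "(\<And>s. s \<in> S \<Longrightarrow> CP (f s)) \<Longrightarrow> CP (\<lambda>z. \<Prod>s\<in>S. f s z)"
  by (induction S rule: infinite_finite_induct) (auto intro: CP_const CP_mult)

lemma delta_exists:
  fixes a :: "'n::finite \<Rightarrow> complex"
  assumes "finite T"
  shows "\<exists>F. CP F \<and> F a = 1 \<and> (\<forall>b\<in>T-{a}. F b = 0)"
proof -
  define j where "j = (\<lambda>b::'n \<Rightarrow> complex. SOME i. a i \<noteq> b i)"
  have j: "a (j b) \<noteq> b (j b)" if "b \<noteq> a" for b
    unfolding j_def by (rule someI_ex) (use that in auto)
  define F where "F = (\<lambda>z. \<Prod>b\<in>T-{a}. (z (j b) - b (j b)) * inverse (a (j b) - b (j b)))"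
  have "CP F" unfolding F_def by (intro CP_prod CP_mult CP_diff CP_var CP_const)
  moreover have "F a = 1" unfolding F_def by (rule prod.neutral) (use j in auto)
  moreover have "F b = 0" if "b \<in> T - {a}" for b
    unfolding F_def using that assms by (intro prod_zero) auto
  ultimately show ?thesis by blast
qed

lemma group_props:
  assumes "finite_matrix_group G"
  shows "finite G" "mat 1 \<in> G" "\<And>a b. a \<in> G \<Longrightarrow> b \<in> G \<Longrightarrow> a ** b \<in> G"
    "\<And>a. a \<in> G \<Longrightarrow> matrix_inv a \<in> G"
    "\<And>a. a \<in> G \<Longrightarrow> a ** matrix_inv a = mat 1" "\<And>a. a \<in> G \<Longrightarrow> matrix_inv a ** a = mat 1"
  using assms inv_props unfolding finite_matrix_group_def by auto

lemma act_inv_cancel: "matrix_inv a ** a = mat 1 \<Longrightarrow> act (matrix_inv a) (act a z) = z"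
  by (metis act_mult act_one)

lemma conj_in_orbit:
  fixes x :: "'n::finite \<Rightarrow> complex"
  assumes G: "finite_matrix_group G"
    and hx: "\<forall>p\<in>inv_ring G. complex_of_real (\<phi> p) = peval p x"
  shows "\<exists>g\<in>G. (\<lambda>i. cnj (x i)) = act g x"
proof (rule ccontr)
  assume nc: "\<not> ?thesis"
  note gp = group_props[OF G]
  define cj where "cj = (\<lambda>z::'n \<Rightarrow> complex. \<lambda>i. cnj (z i))"
  define Orb where "Orb = (\<lambda>g. act g x) ` G"
  define T where "T = Orb \<union> cj ` Orb"
  have fT: "finite T" unfolding T_def Orb_def using gp(1) by auto
  have disj: "cj z \<noteq> a" if zO: "z \<in> Orb" and aO: "a \<in> Orb" for z a
  proof
    assume e: "cj z = a"
    obtain g g' where g: "g \<in> G" "z = act g x" and g': "g' \<in> G" "a = act g' x"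
    proof -
      from zO obtain g where "g \<in> G" "z = act g x" unfolding Orb_def by blast
      moreover from aO obtain g' where "g' \<in> G" "a = act g' x" unfolding Orb_def by blast
      ultimately show ?thesis using that by blast
    qed
    have "act g (cj x) = act g' x" using e g g' unfolding cj_def by (simp add: act_cnj)
    then have "act (matrix_inv g) (act g (cj x)) = act (matrix_inv g) (act g' x)" by simp
    then have "cj x = act (matrix_inv g) (act g' x)" using act_inv_cancel[OF gp(6)[OF g(1)]] by metis
    then have "cj x = act (matrix_inv g ** g') x" by (simp add: act_mult)
    then show False using nc gp(3)[OF gp(4)[OF g(1)] g'(1)] unfolding cj_def by blast
  qed
  have "\<forall>a\<in>Orb. \<exists>F. CP F \<and> F a = 1 \<and> (\<forall>b\<in>T-{a}. F b = 0)"
    using delta_exists[OF fT] by blast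
  then obtain \<delta> where \<delta>: "\<And>a. a \<in> Orb \<Longrightarrow> CP (\<delta> a) \<and> \<delta> a a = 1 \<and> (\<forall>b\<in>T-{a}. \<delta> a b = 0)"
    by metis
  define f where "f = (\<lambda>z. \<Sum>a\<in>Orb. \<delta> a z)"
  have "CP f" unfolding f_def using \<delta> by (intro CP_sum) auto
  then obtain A B where AB: "RP A" "RP B" "\<And>z. f z = A z + \<i> * B z" unfolding CP_def by blast
  have fO: "finite Orb" unfolding Orb_def using gp(1) by auto
  have f1: "f z = 1" if "z \<in> Orb" for z
  proof -
    have "f z = \<delta> z z + (\<Sum>a\<in>Orb-{z}. \<delta> a z)" unfolding f_def using that fO by (simp add: sum.remove)
    also have "(\<Sum>a\<in>Orb-{z}. \<delta> a z) = 0" using \<delta> that unfolding T_def by (intro sum.neutral) auto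
    finally show ?thesis using \<delta> that by simp
  qed
  have f0: "f (cj z) = 0" if "z \<in> Orb" for z
    unfolding f_def using \<delta> that disj unfolding T_def by (intro sum.neutral) auto
  have Bz: "B z = - \<i> / 2" if "z \<in> Orb" for z
  proof -
    have e1: "A z + \<i> * B z = 1" using f1[OF that] AB by simp
    have "A (cj z) + \<i> * B (cj z) = 0" using f0[OF that] AB by simp
    then have "cnj (A z) + \<i> * cnj (B z) = 0" using RP_cnj[OF AB(1)] RP_cnj[OF AB(2)] unfolding cj_def by simp
    then have "cnj (cnj (A z) + \<i> * cnj (B z)) = 0" by simp
    then have e2: "A z - \<i> * B z = 0" by simp
    have "B z = -\<i>/2 * ((A z + \<i>*B z) - (A z - \<i>*B z))" by (simp add: algebra_simps)
    then show ?thesis by (simp only: e1 e2) simp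
  qed
  define P where "P = (\<lambda>z. \<Sum>g\<in>G. B (act g z))"
  have "RP P" unfolding P_def by (intro RP_sum RP_act AB(2))
  then obtain p where p: "\<And>z. P z = peval p z" unfolding RP_def by blast
  have Pinv: "P (act h z) = P z" if "h \<in> G" for h z
  proof -
    have bij: "bij_betw (\<lambda>g. g ** h) G G"
    proof (rule bij_betwI[where g = "\<lambda>g. g ** matrix_inv h"])
      show "(\<lambda>g. g ** h) \<in> G \<rightarrow> G" using gp(3) that by blast
      show "(\<lambda>g. g ** matrix_inv h) \<in> G \<rightarrow> G" using gp(3,4) that by blast
      fix g
      have "g ** h ** matrix_inv h = g ** (h ** matrix_inv h)" by (simp only: matrix_mul_assoc)
      also have "\<dots> = g" by (simp only: gp(5)[OF that] matrix_mul_rid)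
      finally show "g ** h ** matrix_inv h = g" .
      have "g ** matrix_inv h ** h = g ** (matrix_inv h ** h)" by (simp only: matrix_mul_assoc)
      also have "\<dots> = g" by (simp only: gp(6)[OF that] matrix_mul_rid)
      finally show "g ** matrix_inv h ** h = g" .
    qed
    have "P (act h z) = (\<Sum>g\<in>G. B (act (g ** h) z))" unfolding P_def by (simp add: act_mult)
    also have "\<dots> = P z" unfolding P_def by (rule sum.reindex_bij_betw[OF bij, of "\<lambda>g. B (act g z)"])
    finally show ?thesis .
  qed
  have "p \<in> inv_ring G"
    unfolding inv_ring_def
  proof (intro CollectI ballI allI)
    fix h w assume h: "h \<in> G"
    have "(of_real (peval p (act h w)) :: complex) = peval p (act h (\<lambda>i. of_real (w i)))"
      by (simp add: act_of_real peval_of_real)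
    also have "\<dots> = peval p (\<lambda>i. of_real (w i))"
      using Pinv[OF h, of "\<lambda>i. of_real (w i)"] by (simp only: p)
    also have "\<dots> = of_real (peval p w)" by (simp add: peval_of_real)
    finally show "peval p (act h w) = peval p w" by simp
  qed
  then have "complex_of_real (\<phi> p) = P x" using hx p by simp
  also have "P x = of_nat (card G) * (- \<i> / 2)"
  proof -
    have "P x = (\<Sum>g\<in>G. - \<i> / 2)" unfolding P_def
      by (rule sum.cong[OF refl]) (rule Bz, unfold Orb_def, blast)
    then show ?thesis by simp
  qed
  finally have "Im (complex_of_real (\<phi> p)) = Im (of_nat (card G) * (- \<i> / 2))" by simp
  moreover have "card G > 0" using gp(1,2) card_gt_0_iff by blast
  ultimately show False by simp
qed

theorem lemma3p5:
  fixes G H :: "(real^'n::finite^'n) set" and \<phi> :: "'n rpoly \<Rightarrow> real"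
  assumes "finite_matrix_group G"
    and "broad H G"
    and "ring_hom_on (inv_ring G) \<phi>"
    and "principal_orbit_type G \<phi>"
  shows "\<exists>\<psi>. ring_hom_on (inv_ring H) \<psi> \<and> (\<forall>p\<in>inv_ring G. \<psi> p = \<phi> p)"
proof -
  note gp = group_props[OF assms(1)]
  obtain x :: "'n \<Rightarrow> complex" where hx: "\<forall>p\<in>inv_ring G. complex_of_real (\<phi> p) = peval p x"
    and stab: "\<forall>g\<in>G. act g x = x \<longrightarrow> g = mat 1"
    using assms(4) unfolding principal_orbit_type_def by blast
  obtain g where g: "g \<in> G" and cx: "(\<lambda>i. cnj (x i)) = act g x"
    using conj_in_orbit[OF assms(1) hx] by blast
  have "act (g ** g) x = x"
  proof -
    have "act (g ** g) x = act g (\<lambda>i. cnj (x i))" by (simp add: act_mult cx)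
    also have "\<dots> = (\<lambda>i. cnj (act g x i))" by (simp add: act_cnj)
    also have "\<dots> = x" by (simp flip: cx)
    finally show ?thesis .
  qed
  then have gg: "g ** g = mat 1" using stab gp(3)[OF g g] by blast
  have Hs: "is_subgroup H G" using assms(2) unfolding broad_def elem_abelian_2_subgroup_def by blast
  obtain k where k: "k \<in> G" "matrix_inv k ** g ** k \<in> H"
  proof (cases "g = mat 1")
    case True
    then show ?thesis using that[of "mat 1"] gp(2) Hs unfolding is_subgroup_def
      by (simp add: matrix_mul_rid)
  next
    case False
    then have "involution g" using gg unfolding involution_def by blast
    then show ?thesis using that assms(2) g unfolding broad_def by blast
  qed
  define h where "h = matrix_inv k ** g ** k"
  define y where "y = act (matrix_inv k) x"
  have cy: "(\<lambda>i. cnj (y i)) = act h y"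
  proof -
    have "(\<lambda>i. cnj (y i)) = act (matrix_inv k) (act g x)" unfolding y_def by (simp add: act_cnj flip: cx)
    also have "\<dots> = act (matrix_inv k ** g ** (k ** matrix_inv k)) x"
      using gp(5)[OF k(1)] by (simp add: act_mult matrix_mul_rid)
    also have "\<dots> = act h y" unfolding h_def y_def by (simp add: act_mult matrix_mul_assoc)
    finally show ?thesis .
  qed
  have real: "Im (peval p y) = 0" if "p \<in> inv_ring H" for p
  proof -
    have "cnj (peval p y) = peval p y"
      using inv_complex[OF that, of h y] k(2) by (simp add: h_def cy flip: peval_cnj)
    then have "Im (cnj (peval p y)) = Im (peval p y)" by simp
    then show ?thesis by simp
  qed
  define \<psi> where "\<psi> = (\<lambda>p. Re (peval p y))"
  have "ring_hom_on (inv_ring H) \<psi>"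
    unfolding ring_hom_on_def \<psi>_def using real by (simp add: peval_add peval_mult)
  moreover have "\<forall>p\<in>inv_ring G. \<psi> p = \<phi> p"
  proof
    fix p assume p: "p \<in> inv_ring G"
    have "peval p y = peval p x" unfolding y_def by (rule inv_complex[OF p gp(4)[OF k(1)]])
    then show "\<psi> p = \<phi> p" using hx p unfolding \<psi>_def by (metis Re_complex_of_real)
  qed
  ultimately show ?thesis by blast
qed

end
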